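(* Let $d\in\{2,3\}$ and let $\Omega\subset\mathbb{R}^d$ be a bounded domain with boundary $\partial\Omega=\Gamma\cup\Gamma'$, $\Gamma\cap\Gamma'=\emptyset$, where $\Gamma$ is the boundary of a bounded domain (the solid). Let $\rho>0$, $m>0$, $\vec c\in\mathbb{R}^d$, $\mathbb{I}$ symmetric positive definite, $\vec n$ the unit normal on $\partial\Omega$ pointing out of $\Omega$, and $\vec J=(\vec x-\vec c)\times\vec n$ on $\Gamma$. Given a triple $(\vec U^*,\vec v^*,\vec\omega^* )$ (a fluid vector field $\vec U^*$ on $\Omega$ and solid linear and angular velocities), let the triple $(\vec U,\vec v,\vec\omega)$ be given by \[ (\vec U^*,\vec v^*,\vec\omega^* )=(\vec U,\vec v,\vec\omega)+\Big(\tfrac1\rho\nabla p,\;-\tfrac1m\int_\Gamma p\,\vec n\,dS,\;-\mathbb{I}^{-1}\int_\Gamma p\,\vec J\,dS\Big) \] for some scalar function $p$ on $\Omega$ (with enough regularity for all the integrals and traces involved to make sense). If $(\vec U,\vec v,\vec\omega)$ satisfies $\nabla\cdot\vec U=0$ in $\Omega$, $\vec U\cdot\vec n=\vec v\cdot\vec n+\vec\omega\cdot\vec J$ on $\Gamma$ and $\vec U\cdot\vec n=0$ on $\Gamma'$, then the decomposition is orthogonal with respect to the inner product $\langle\cdot,\cdot\rangle_E$, i.e. \[ \Big\langle(\vec U,\vec v,\vec\omega),\Big(\tfrac1\rho\nabla p,\;-\tfrac1m\int_\Gamma p\vec n\,dS,\;-\mathbb{I}^{-1}\int_\Gamma p\vec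 J\,dS\Big)\Big\rangle_E=0, \] and the kinetic energy decreases: $E^*\ge E$, where $E^*=\langle(\vec U^*,\vec v^*,\vec\omega^* ),(\vec U^*,\vec v^*,\vec\omega^* )\rangle_E$ and $E=\langle(\vec U,\vec v,\vec\omega),(\vec U,\vec v,\vec\omega)\rangle_E$.
   Context: The inner product on $L^2(\Omega)^d\times\mathbb{R}^d\times\mathbb{R}^d$ is \[ \langle(\vec U^{(1)},\vec v^{(1)},\vec\omega^{(1)}),(\vec U^{(2)},\vec v^{(2)},\vec\omega^{(2)})\rangle_E=\int_\Omega\tfrac12\rho\,\vec U^{(1)}\cdot\vec U^{(2)}\,dx+\tfrac12 m\,\vec v^{(1)}\cdot\vec v^{(2)}+\tfrac12\vec\omega^{(1)}\cdot\mathbb{I}\vec\omega^{(2)}, \] so that $E^*=\int_\Omega\frac12\rho|\vec U^*|^2dx+\frac12m|\vec v^*|^2+\frac12\vec\omega^*\cdot\mathbb{I}\vec\omega^*$. When $d=2$, vectors are embedded in $\mathbb{R}^3$ with zero third component, the angular velocity is $(0,0,\omega)$, planar cross products $a_1b_2-a_2b_1$ are identified with scalars (or vectors on the $z$-axis), and the inertia is a positive scalar. *)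

theory Defs
  imports "HOL-Analysis.Analysis" "HOL-Analysis.Cross3"
begin

text \<open>Partial derivatives via the Frechet derivative.\<close>

definition grad :: "(real^'n \<Rightarrow> real) \<Rightarrow> real^'n \<Rightarrow> real^'n" where
  "grad p x = (\<chi> i. frechet_derivative p (at x) (axis i 1))"

definition divergence :: "(real^'n \<Rightarrow> real^'n) \<Rightarrow> real^'n \<Rightarrow> real" where
  "divergence F x = (\<Sum>i\<in>UNIV. frechet_derivative F (at x) (axis i 1) $ i)"

text \<open>F is continuously differentiable on an open neighbourhood of S.\<close>

definition C1_near :: "(real^'n) set \<Rightarrow> (real^'n \<Rightarrow> 'b::real_normed_vector) \<Rightarrow> bool" where
  "C1_near S F \<longleftrightarrow> (\<exists>U. open U \<and> S \<subseteq> U \<and> (\<forall>x\<in>U. F differentiable (at x)) \<and>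
      (\<forall>i. continuous_on U (\<lambda>x. frechet_derivative F (at x) (axis i 1))))"

text \<open>sigma is the surface measure on the boundary of Omega and n the unit normal
  pointing out of Omega, characterised (as in the measure-theoretic / De Giorgi
  sense) by the Gauss-Green formula for all C^1 fields near the closure.\<close>

definition outward_normal :: "(real^'n) set \<Rightarrow> (real^'n) measure \<Rightarrow> (real^'n \<Rightarrow> real^'n) \<Rightarrow> bool" where
  "outward_normal \<Omega> \<sigma> n \<longleftrightarrow>
     sets \<sigma> = sets borel \<and> finite_measure \<sigma> \<and> emeasure \<sigma> (- frontier \<Omega>) = 0 \<and>
     n \<in> borel_measurable borel \<and> (\<forall>x\<in>frontier \<Omega>. norm (n x) = 1) \<and>
     (\<forall>F. C1_near (closure \<Omega>) F \<longrightarrow>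
        (LINT x:\<Omega>|lebesgue. divergence F x) = (\<integral>x. F x \<bullet> n x \<partial>\<sigma>))"

definition bounded_domain :: "(real^'n) set \<Rightarrow> bool" where
  "bounded_domain S \<longleftrightarrow> open S \<and> bounded S \<and> connected S \<and> S \<noteq> {}"

text \<open>The energy inner product; Iop is the inertia acting on angular velocities.\<close>

definition ipE :: "(real^'n) set \<Rightarrow> real \<Rightarrow> real \<Rightarrow> ('k::real_inner \<Rightarrow> 'k) \<Rightarrow>
     (real^'n \<Rightarrow> real^'n) \<times> (real^'n) \<times> 'k \<Rightarrow> (real^'n \<Rightarrow> real^'n) \<times> (real^'n) \<times> 'k \<Rightarrow> real" where
  "ipE \<Omega> \<rho> m Iop X Y = (case X of (U1, v1, w1) \<Rightarrow> case Y of (U2, v2, w2) \<Rightarrow>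
      (LINT x:\<Omega>|lebesgue. (1/2) * \<rho> * (U1 x \<bullet> U2 x)) + (1/2) * m * (v1 \<bullet> v2) + (1/2) * (w1 \<bullet> Iop w2))"

text \<open>Planar cross product identified with a scalar.\<close>

definition cross2 :: "real^2 \<Rightarrow> real^2 \<Rightarrow> real" where
  "cross2 a b = a$1 * b$2 - a$2 * b$1"

end

theory Submission
  imports Defs
begin

lemma C1_nearD:
  assumes "C1_near S F"
  obtains V where "open V" "S \<subseteq> V" "\<And>x. x \<in> V \<Longrightarrow> F differentiable (at x)"
    "\<And>i. continuous_on V (\<lambda>x. frechet_derivative F (at x) (axis i 1))"
    "continuous_on V F"
proof -
  obtain V where V: "open V" "S \<subseteq> V" "\<forall>x\<in>V. F differentiable (at x)"
    "\<forall>i. continuous_on V (\<lambda>x. frechet_derivative F (at x) (axis i 1))"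
    using assms unfolding C1_near_def by blast
  have "continuous_on V F"
    using V(3) by (simp add: continuous_at_imp_continuous_on differentiable_imp_continuous_within)
  then show ?thesis using V that by blast
qed

lemma set_integrable_cont_closure:
  fixes f :: "real^'n \<Rightarrow> real"
  assumes "bounded \<Omega>" "open \<Omega>" "continuous_on (closure \<Omega>) f"
  shows "set_integrable lebesgue \<Omega> f"
proof -
  have c: "compact (closure \<Omega>)" using assms(1) by (simp add: compact_closure)
  have "integrable lborel (\<lambda>x. indicator (closure \<Omega>) x *\<^sub>R f x)"
    by (rule borel_integrable_compact[OF c assms(3)])
  moreover have "(\<lambda>x. indicator (closure \<Omega>) x *\<^sub>R f x) \<in> borel_measurable lborel"
    using borel_measurable_continuous_on_indicator[OF _ assms(3)] by simp
  ultimately have "set_integrable lebesgue (closure \<Omega>) f"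
    unfolding set_integrable_def using integrable_completion by blast
  moreover have "\<Omega> \<in> sets lebesgue"
    using lmeasurable_open[OF assms(1,2)] by (simp add: fmeasurable_def)
  ultimately show ?thesis
    by (rule set_integrable_subset) (rule closure_subset)
qed

lemma set_integrable_bdry:
  fixes p :: "real^'n \<Rightarrow> real" and h :: "real^'n \<Rightarrow> 'b::{banach,second_countable_topology}"
  assumes fm: "finite_measure \<sigma>" and s: "sets \<sigma> = sets borel" and K: "compact K"
    and G: "closed \<Gamma>" "\<Gamma> \<subseteq> K" and pc: "continuous_on K p"
    and hm: "h \<in> borel_measurable borel" and hb: "\<forall>x\<in>\<Gamma>. norm (h x) \<le> C" and C: "0 \<le> C"
  shows "set_integrable \<sigma> \<Gamma> (\<lambda>x. p x *\<^sub>R h x)"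
proof -
  obtain B where B: "\<forall>x\<in>K. norm (p x) \<le> B" "B \<ge> 0"
    using compact_continuous_image[OF pc K] compact_imp_bounded bounded_pos
    by (metis image_eqI less_le_not_le nle_le)
  have m1: "(\<lambda>x. indicator \<Gamma> x *\<^sub>R p x) \<in> borel_measurable borel"
    by (rule borel_measurable_continuous_on_indicator) (use G pc continuous_on_subset in auto)
  have m: "(\<lambda>x. indicator \<Gamma> x *\<^sub>R (p x *\<^sub>R h x)) \<in> borel_measurable \<sigma>"
  proof -
    have "(\<lambda>x. (indicator \<Gamma> x *\<^sub>R p x) *\<^sub>R h x) \<in> borel_measurable borel"
      using m1 hm by measurable
    then show ?thesis by (subst measurable_cong_sets[OF s refl]) simp
  qed
  have bd: "\<forall>x. norm (indicator \<Gamma> x *\<^sub>R (p x *\<^sub>R h x)) \<le> B * C"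
  proof
    fix x show "norm (indicator \<Gamma> x *\<^sub>R (p x *\<^sub>R h x)) \<le> B * C"
    proof (cases "x \<in> \<Gamma>")
      case True
      then have "norm (p x) \<le> B" "norm (h x) \<le> C" using B hb G by auto
      then show ?thesis using True by (simp add: mult_mono' B(2))
    qed (simp add: B C)
  qed
  show ?thesis unfolding set_integrable_def
    by (rule finite_measure.integrable_const_bound[OF fm, of _ "B*C"]) (use bd m in auto)
qed

lemma GG:
  fixes \<Omega> :: "(real^'n) set" and p :: "real^'n \<Rightarrow> real" and U :: "real^'n \<Rightarrow> real^'n"
    and g :: "real^'n \<Rightarrow> real"
  assumes Oo: "open \<Omega>" and fr: "frontier \<Omega> = \<Gamma> \<union> \<Gamma>'" and dj: "\<Gamma> \<inter> \<Gamma>' = {}"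
    and Gc: "closed \<Gamma>" and on: "outward_normal \<Omega> \<sigma> n"
    and Cp: "C1_near (closure \<Omega>) p" and CU: "C1_near (closure \<Omega>) U"
    and dv: "\<forall>x\<in>\<Omega>. divergence U x = 0"
    and gm: "g \<in> borel_measurable borel"
    and bc1: "AE x in \<sigma>. x \<in> \<Gamma> \<longrightarrow> U x \<bullet> n x = g x"
    and bc2: "AE x in \<sigma>. x \<in> \<Gamma>' \<longrightarrow> U x \<bullet> n x = 0"
  shows "(LINT x:\<Omega>|lebesgue. grad p x \<bullet> U x) = (LINT x:\<Gamma>|\<sigma>. p x * g x)"
proof -
  obtain Vp where Vp: "open Vp" "closure \<Omega> \<subseteq> Vp" "\<And>x. x \<in> Vp \<Longrightarrow> p differentiable (at x)"
    "\<And>i. continuous_on Vp (\<lambda>x. frechet_derivative p (at x) (axis i 1))" "continuous_on Vp p"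
    using C1_nearD[OF Cp] by blast
  obtain VU where VU: "open VU" "closure \<Omega> \<subseteq> VU" "\<And>x. x \<in> VU \<Longrightarrow> U differentiable (at x)"
    "\<And>i. continuous_on VU (\<lambda>x. frechet_derivative U (at x) (axis i 1))" "continuous_on VU U"
    using C1_nearD[OF CU] by blast
  define V where "V = Vp \<inter> VU"
  have Vo: "open V" and cV: "closure \<Omega> \<subseteq> V" using Vp VU by (auto simp: V_def)
  define F where "F = (\<lambda>x. indicator V x *\<^sub>R (p x *\<^sub>R U x))"
  define D where "D = (\<lambda>x h. p x *\<^sub>R frechet_derivative U (at x) h + frechet_derivative p (at x) h *\<^sub>R U x)"
  have derF: "(F has_derivative D x) (at x)" if "x \<in> V" for x
  proof -
    have "(p has_derivative frechet_derivative p (at x)) (at x)"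
      using Vp(3) that frechet_derivative_works by (auto simp: V_def)
    moreover have "(U has_derivative frechet_derivative U (at x)) (at x)"
      using VU(3) that frechet_derivative_works by (auto simp: V_def)
    ultimately have "((\<lambda>x. p x *\<^sub>R U x) has_derivative D x) (at x)"
      unfolding D_def by (rule has_derivative_scaleR)
    then show ?thesis
      by (rule has_derivative_transform_within_open[OF _ Vo that]) (simp add: F_def)
  qed
  have FD: "frechet_derivative F (at x) = D x" if "x \<in> V" for x
    using frechet_derivative_at[OF derF[OF that]] by simp
  have C1F: "C1_near (closure \<Omega>) F"
    unfolding C1_near_def
  proof (intro exI conjI ballI allI)
    show "open V" "closure \<Omega> \<subseteq> V" by fact+
    show "F differentiable (at x)" if "x \<in> V" for x using derF[OF that] by (auto simp: differentiable_def)
    fix i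
    have "continuous_on V (\<lambda>x. D x (axis i 1))"
      unfolding D_def
      by (intro continuous_intros continuous_on_subset[OF Vp(5)] continuous_on_subset[OF VU(5)]
          continuous_on_subset[OF Vp(4)] continuous_on_subset[OF VU(4)]) (auto simp: V_def)
    then show "continuous_on V (\<lambda>x. frechet_derivative F (at x) (axis i 1))"
      by (rule continuous_on_cong[THEN iffD1, rotated 2]) (auto simp: FD)
  qed
  have gg: "(LINT x:\<Omega>|lebesgue. divergence F x) = (\<integral>x. F x \<bullet> n x \<partial>\<sigma>)"
    using on C1F unfolding outward_normal_def by blast
  have s: "sets \<sigma> = sets borel" and nm: "n \<in> borel_measurable borel"
    and z: "emeasure \<sigma> (- frontier \<Omega>) = 0" using on unfolding outward_normal_def by auto
  have "(LINT x:\<Omega>|lebesgue. divergence F x) = (LINT x:\<Omega>|lebesgue. grad p x \<bullet> U x)"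
  proof (rule set_lebesgue_integral_cong)
    show "\<Omega> \<in> sets lebesgue" using Oo by simp
    show "\<forall>x. x \<in> \<Omega> \<longrightarrow> divergence F x = grad p x \<bullet> U x"
    proof (intro allI impI)
      fix x assume x: "x \<in> \<Omega>"
      then have xV: "x \<in> V" using cV closure_subset by blast
      have "divergence F x = p x * divergence U x + grad p x \<bullet> U x"
        unfolding divergence_def FD[OF xV] D_def grad_def inner_vec_def
        by (simp add: sum.distrib sum_distrib_left)
      then show "divergence F x = grad p x \<bullet> U x" using dv x by simp
    qed
  qed
  moreover have "(\<integral>x. F x \<bullet> n x \<partial>\<sigma>) = (\<integral>x. indicator \<Gamma> x *\<^sub>R (p x * g x) \<partial>\<sigma>)"
  proof (rule integral_cong_AE)
    have "F \<in> borel_measurable borel"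
      unfolding F_def
      by (rule borel_measurable_continuous_on_indicator)
        (use Vo in \<open>auto intro!: continuous_intros continuous_on_subset[OF Vp(5)] continuous_on_subset[OF VU(5)] simp: V_def\<close>)
    then have "(\<lambda>x. F x \<bullet> n x) \<in> borel_measurable borel" using nm by measurable
    then show "(\<lambda>x. F x \<bullet> n x) \<in> borel_measurable \<sigma>"
      by (subst measurable_cong_sets[OF s refl]) simp
    have "(\<lambda>x. indicator V x *\<^sub>R p x) \<in> borel_measurable borel"
      by (rule borel_measurable_continuous_on_indicator)
        (use Vo in \<open>auto intro!: continuous_on_subset[OF Vp(5)] simp: V_def\<close>)
    moreover have "(\<lambda>x. indicator \<Gamma> x :: real) \<in> borel_measurable borel"
      using Gc borel_closed borel_measurable_indicator by blast
    ultimately have "(\<lambda>x. indicator \<Gamma> x * (indicator V x *\<^sub>R p x) * g x) \<in> borel_measurable borel"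
      using gm by measurable
    moreover have "\<Gamma> \<subseteq> V" using fr cV frontier_def by auto
    then have "(\<lambda>x. indicator \<Gamma> x * (indicator V x *\<^sub>R p x) * g x) = (\<lambda>x. indicator \<Gamma> x *\<^sub>R (p x * g x))"
      by (auto simp: indicator_def fun_eq_iff)
    ultimately have "(\<lambda>x. indicator \<Gamma> x *\<^sub>R (p x * g x)) \<in> borel_measurable borel"
      by simp
    then show "(\<lambda>x. indicator \<Gamma> x *\<^sub>R (p x * g x)) \<in> borel_measurable \<sigma>"
      by (subst measurable_cong_sets[OF s refl]) simp
    have "- frontier \<Omega> \<in> null_sets \<sigma>"
      using z s by (auto simp: null_sets_def)
    then have "AE x in \<sigma>. x \<in> frontier \<Omega>" using AE_not_in by fastforce
    then show "AE x in \<sigma>. F x \<bullet> n x = indicator \<Gamma> x *\<^sub>R (p x * g x)"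
      using bc1 bc2
    proof eventually_elim
      case (elim x)
      then have xV: "x \<in> V" using cV frontier_def by auto
      show ?case using elim xV dj fr by (auto simp: F_def indicator_def)
    qed
  qed
  ultimately show ?thesis using gg by (simp add: set_lebesgue_integral_def)
qed

lemma main:
  fixes \<Omega> :: "(real^'n) set" and Iop Linv :: "'k::euclidean_space \<Rightarrow> 'k" and J :: "real^'n \<Rightarrow> 'k"
    and w wstar :: 'k and p :: "real^'n \<Rightarrow> real" and U Ustar :: "real^'n \<Rightarrow> real^'n"
  assumes Oo: "open \<Omega>" and Ob: "bounded \<Omega>" and fr: "frontier \<Omega> = \<Gamma> \<union> \<Gamma>'" and dj: "\<Gamma> \<inter> \<Gamma>' = {}"
    and Gc: "closed \<Gamma>" and on: "outward_normal \<Omega> \<sigma> n" and rho: "\<rho> > 0" and mp: "m > 0"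
    and lin: "linear Iop" and sym: "\<And>a b. a \<bullet> Iop b = b \<bullet> Iop a" and pos: "\<And>a. 0 \<le> a \<bullet> Iop a"
    and inv: "\<And>z. Iop (Linv z) = z"
    and Cp: "C1_near (closure \<Omega>) p" and CU: "C1_near (closure \<Omega>) U"
    and Us: "\<forall>x\<in>\<Omega>. Ustar x = U x + (1/\<rho>) *\<^sub>R grad p x"
    and vs: "vstar = v + (- (1/m) *\<^sub>R (LINT x:\<Gamma>|\<sigma>. p x *\<^sub>R n x))"
    and ws: "wstar = w + (- Linv (LINT x:\<Gamma>|\<sigma>. p x *\<^sub>R J x))"
    and dv: "\<forall>x\<in>\<Omega>. divergence U x = 0"
    and bc1: "AE x in \<sigma>. x \<in> \<Gamma> \<longrightarrow> U x \<bullet> n x = v \<bullet> n x + w \<bullet> J x"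
    and bc2: "AE x in \<sigma>. x \<in> \<Gamma>' \<longrightarrow> U x \<bullet> n x = 0"
    and Jm: "J \<in> borel_measurable borel" and CJ: "0 \<le> CJ" and Jb: "\<forall>x\<in>\<Gamma>. norm (J x) \<le> CJ"
  shows "ipE \<Omega> \<rho> m Iop (U, v, w)
        (\<lambda>x. (1/\<rho>) *\<^sub>R grad p x, - (1/m) *\<^sub>R (LINT x:\<Gamma>|\<sigma>. p x *\<^sub>R n x),
         - Linv (LINT x:\<Gamma>|\<sigma>. p x *\<^sub>R J x)) = 0 \<and>
     ipE \<Omega> \<rho> m Iop (Ustar, vstar, wstar) (Ustar, vstar, wstar) \<ge> ipE \<Omega> \<rho> m Iop (U, v, w) (U, v, w)"
proof -
  define A where "A = (LINT x:\<Gamma>|\<sigma>. p x *\<^sub>R n x)"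
  define B where "B = (LINT x:\<Gamma>|\<sigma>. p x *\<^sub>R J x)"
  define G where "G = (\<lambda>x. (1/\<rho>) *\<^sub>R grad p x)"
  define a where "a = - (1/m) *\<^sub>R A"
  define b where "b = - Linv B"
  have s: "sets \<sigma> = sets borel" and nm: "n \<in> borel_measurable borel" and fm: "finite_measure \<sigma>"
    and n1: "\<forall>x\<in>frontier \<Omega>. norm (n x) = 1" using on unfolding outward_normal_def by auto
  have K: "compact (closure \<Omega>)" using Ob by (simp add: compact_closure)
  have GK: "\<Gamma> \<subseteq> closure \<Omega>" using fr frontier_def by auto
  obtain Vp where Vp: "open Vp" "closure \<Omega> \<subseteq> Vp" "\<And>x. x \<in> Vp \<Longrightarrow> p differentiable (at x)"
    "\<And>i. continuous_on Vp (\<lambda>x. frechet_derivative p (at x) (axis i 1))" "continuous_on Vp p"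
    using C1_nearD[OF Cp] by blast
  obtain VU where VU: "open VU" "closure \<Omega> \<subseteq> VU" "\<And>x. x \<in> VU \<Longrightarrow> U differentiable (at x)"
    "\<And>i. continuous_on VU (\<lambda>x. frechet_derivative U (at x) (axis i 1))" "continuous_on VU U"
    using C1_nearD[OF CU] by blast
  have pc: "continuous_on (closure \<Omega>) p" using Vp continuous_on_subset by blast
  have Uc: "continuous_on (closure \<Omega>) U" using VU continuous_on_subset by blast
  have Gc': "continuous_on (closure \<Omega>) G"
    unfolding G_def grad_def
    by (intro continuous_intros continuous_on_subset[OF Vp(4) Vp(2)])
  have intA: "set_integrable \<sigma> \<Gamma> (\<lambda>x. p x *\<^sub>R n x)"
    by (rule set_integrable_bdry[OF fm s K Gc GK pc nm, of 1]) (use n1 fr in auto)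
  have intB: "set_integrable \<sigma> \<Gamma> (\<lambda>x. p x *\<^sub>R J x)"
    by (rule set_integrable_bdry[OF fm s K Gc GK pc Jm Jb CJ])
  have gmeas: "(\<lambda>x. v \<bullet> n x + w \<bullet> J x) \<in> borel_measurable borel" using nm Jm by measurable
  have gg: "(LINT x:\<Omega>|lebesgue. grad p x \<bullet> U x) = (LINT x:\<Gamma>|\<sigma>. p x * (v \<bullet> n x + w \<bullet> J x))"
    by (rule GG[OF Oo fr dj Gc on Cp CU dv gmeas bc1 bc2])
  have "(LINT x:\<Gamma>|\<sigma>. p x * (v \<bullet> n x + w \<bullet> J x)) = (LINT x:\<Gamma>|\<sigma>. v \<bullet> (p x *\<^sub>R n x) + w \<bullet> (p x *\<^sub>R J x))"
    by (simp add: algebra_simps)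
  also have "\<dots> = (LINT x:\<Gamma>|\<sigma>. v \<bullet> (p x *\<^sub>R n x)) + (LINT x:\<Gamma>|\<sigma>. w \<bullet> (p x *\<^sub>R J x))"
  proof (rule set_integral_add(2))
    show "set_integrable \<sigma> \<Gamma> (\<lambda>x. v \<bullet> (p x *\<^sub>R n x))"
      using integrable_inner_right[OF intA[unfolded set_integrable_def], of v]
      unfolding set_integrable_def by (simp add: inner_scaleR_right mult.assoc)
    show "set_integrable \<sigma> \<Gamma> (\<lambda>x. w \<bullet> (p x *\<^sub>R J x))"
      using integrable_inner_right[OF intB[unfolded set_integrable_def], of w]
      unfolding set_integrable_def by (simp add: inner_scaleR_right mult.assoc)
  qed
  also have "\<dots> = v \<bullet> A + w \<bullet> B"
  proof -
    have "(LINT x:\<Gamma>|\<sigma>. v \<bullet> (p x *\<^sub>R n x)) = v \<bullet> A"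
      using intA unfolding A_def set_integrable_def set_lebesgue_integral_def
      by (simp add: inner_scaleR_right[symmetric] del: inner_scaleR_right)
    moreover have "(LINT x:\<Gamma>|\<sigma>. w \<bullet> (p x *\<^sub>R J x)) = w \<bullet> B"
      using intB unfolding B_def set_integrable_def set_lebesgue_integral_def
      by (simp add: inner_scaleR_right[symmetric] del: inner_scaleR_right)
    ultimately show ?thesis by simp
  qed
  finally have key: "(LINT x:\<Omega>|lebesgue. grad p x \<bullet> U x) = v \<bullet> A + w \<bullet> B" using gg by simp
  have Oset: "\<Omega> \<in> sets lebesgue" using Oo by simp
  have I1: "(LINT x:\<Omega>|lebesgue. (1/2) * \<rho> * (U x \<bullet> G x)) = (1/2) * (v \<bullet> A + w \<bullet> B)"
  proof -
    have "(LINT x:\<Omega>|lebesgue. (1/2) * \<rho> * (U x \<bullet> G x)) = (LINT x:\<Omega>|lebesgue. (1/2) * (grad p x \<bullet> U x))"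
      by (rule set_lebesgue_integral_cong[OF Oset]) (use rho in \<open>simp add: G_def inner_commute\<close>)
    then show ?thesis using key by simp
  qed
  have Lm: "Iop (- x) = - Iop x" for x using lin by (rule linear_neg)
  have orth: "ipE \<Omega> \<rho> m Iop (U, v, w) (G, a, b) = 0"
    unfolding ipE_def using I1 mp by (simp add: a_def b_def Lm inv algebra_simps)
  have cl: "continuous_on (closure \<Omega>) (\<lambda>x. (1/2) * \<rho> * (f x \<bullet> g x))"
    if "continuous_on (closure \<Omega>) f" "continuous_on (closure \<Omega>) g" for f g :: "real^'n \<Rightarrow> real^'n"
    using that by (intro continuous_intros)
  have iUU: "set_integrable lebesgue \<Omega> (\<lambda>x. (1/2) * \<rho> * (U x \<bullet> U x))"
    by (rule set_integrable_cont_closure[OF Ob Oo cl[OF Uc Uc]])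
  have iUG: "set_integrable lebesgue \<Omega> (\<lambda>x. (1/2) * \<rho> * (U x \<bullet> G x))"
    by (rule set_integrable_cont_closure[OF Ob Oo cl[OF Uc Gc']])
  have iGG: "set_integrable lebesgue \<Omega> (\<lambda>x. (1/2) * \<rho> * (G x \<bullet> G x))"
    by (rule set_integrable_cont_closure[OF Ob Oo cl[OF Gc' Gc']])
  have "(LINT x:\<Omega>|lebesgue. (1/2) * \<rho> * (Ustar x \<bullet> Ustar x))
      = (LINT x:\<Omega>|lebesgue. ((1/2) * \<rho> * (U x \<bullet> U x) + 2 * ((1/2) * \<rho> * (U x \<bullet> G x))) + (1/2) * \<rho> * (G x \<bullet> G x))"
    by (rule set_lebesgue_integral_cong[OF Oset])
      (use Us in \<open>simp add: G_def inner_add_left inner_add_right inner_commute algebra_simps\<close>)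
  also have "\<dots> = (LINT x:\<Omega>|lebesgue. (1/2) * \<rho> * (U x \<bullet> U x)) + 2 * (LINT x:\<Omega>|lebesgue. (1/2) * \<rho> * (U x \<bullet> G x))
      + (LINT x:\<Omega>|lebesgue. (1/2) * \<rho> * (G x \<bullet> G x))"
    using iUU iUG iGG by (simp add: set_integral_add)
  finally have EU: "(LINT x:\<Omega>|lebesgue. (1/2) * \<rho> * (Ustar x \<bullet> Ustar x))
      = (LINT x:\<Omega>|lebesgue. (1/2) * \<rho> * (U x \<bullet> U x)) + 2 * (LINT x:\<Omega>|lebesgue. (1/2) * \<rho> * (U x \<bullet> G x))
      + (LINT x:\<Omega>|lebesgue. (1/2) * \<rho> * (G x \<bullet> G x))" .
  have GG0: "0 \<le> (LINT x:\<Omega>|lebesgue. (1/2) * \<rho> * (G x \<bullet> G x))"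
    unfolding set_lebesgue_integral_def
    by (rule integral_nonneg_AE) (use rho in \<open>auto simp: indicator_def\<close>)
  have Ladd: "Iop (x + y) = Iop x + Iop y" for x y using lin by (rule linear_add)
  have ww: "wstar \<bullet> Iop wstar = w \<bullet> Iop w + 2 * (w \<bullet> Iop b) + b \<bullet> Iop b"
    unfolding ws b_def[symmetric] B_def[symmetric] Ladd
    using sym[of b w] by (simp add: inner_add_left inner_add_right)
  have vv: "vstar \<bullet> vstar = v \<bullet> v + 2 * (v \<bullet> a) + a \<bullet> a"
    unfolding vs A_def[symmetric] a_def[symmetric] by (simp add: inner_add_left inner_add_right inner_commute)
  define IS where "IS = (LINT x:\<Omega>|lebesgue. (1/2) * \<rho> * (Ustar x \<bullet> Ustar x))"
  define I1 where "I1 = (LINT x:\<Omega>|lebesgue. (1/2) * \<rho> * (U x \<bullet> U x))"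
  define I2 where "I2 = (LINT x:\<Omega>|lebesgue. (1/2) * \<rho> * (U x \<bullet> G x))"
  define I3 where "I3 = (LINT x:\<Omega>|lebesgue. (1/2) * \<rho> * (G x \<bullet> G x))"
  have e1: "ipE \<Omega> \<rho> m Iop (Ustar, vstar, wstar) (Ustar, vstar, wstar) = IS + (1/2) * m * (vstar \<bullet> vstar) + (1/2) * (wstar \<bullet> Iop wstar)"
    unfolding ipE_def IS_def by simp
  have e2: "ipE \<Omega> \<rho> m Iop (U, v, w) (U, v, w) = I1 + (1/2) * m * (v \<bullet> v) + (1/2) * (w \<bullet> Iop w)"
    unfolding ipE_def I1_def by simp
  have e3: "ipE \<Omega> \<rho> m Iop (U, v, w) (G, a, b) = I2 + (1/2) * m * (v \<bullet> a) + (1/2) * (w \<bullet> Iop b)"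
    unfolding ipE_def I2_def by simp
  have EU': "IS = I1 + 2 * I2 + I3" using EU unfolding IS_def I1_def I2_def I3_def .
  have "ipE \<Omega> \<rho> m Iop (Ustar, vstar, wstar) (Ustar, vstar, wstar)
      = ipE \<Omega> \<rho> m Iop (U, v, w) (U, v, w) + 2 * ipE \<Omega> \<rho> m Iop (U, v, w) (G, a, b)
        + (I3 + (1/2) * m * (a \<bullet> a) + (1/2) * (b \<bullet> Iop b))"
    unfolding e1 e2 e3 EU' ww vv by (simp add: algebra_simps)
  moreover have "0 \<le> I3 + (1/2) * m * (a \<bullet> a) + (1/2) * (b \<bullet> Iop b)"
    using GG0[folded I3_def] mp pos[of b] by simp
  ultimately have "ipE \<Omega> \<rho> m Iop (Ustar, vstar, wstar) (Ustar, vstar, wstar) \<ge> ipE \<Omega> \<rho> m Iop (U, v, w) (U, v, w)"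
    using orth by simp
  then show ?thesis using orth unfolding G_def a_def b_def A_def B_def by simp
qed

lemma matrix_facts:
  fixes I :: "real^3^3"
  assumes tr: "transpose I = I" and pd: "\<forall>x. x \<noteq> 0 \<longrightarrow> x \<bullet> (I *v x) > 0"
  shows "\<And>a b. a \<bullet> (I *v b) = b \<bullet> (I *v a)" "\<And>a. 0 \<le> a \<bullet> (I *v a)"
    "\<And>z. I *v (matrix_inv I *v z) = z"
proof -
  show sy: "a \<bullet> (I *v b) = b \<bullet> (I *v a)" for a b
  proof -
    have "a \<bullet> (I *v b) = (a v* I) \<bullet> b" by (simp add: dot_lmul_matrix)
    also have "a v* I = transpose I *v a" by simp
    finally show ?thesis using tr by (simp add: inner_commute)
  qed
  show "0 \<le> a \<bullet> (I *v a)" for a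
    using pd by (cases "a = 0") (auto intro: less_imp_le)
  have "inj ((*v) I)"
  proof (rule injI)
    fix x y assume "I *v x = I *v y"
    then have "I *v (x - y) = 0" by (simp add: matrix_vector_mult_diff_distrib)
    then show "x = y" using pd[rule_format, of "x - y"] by (cases "x - y = 0") auto
  qed
  then have "invertible I" using invertible_left_inverse matrix_left_invertible_injective by blast
  then have "I ** matrix_inv I = mat 1"
    unfolding invertible_def matrix_inv_def by (rule someI_ex[where P="\<lambda>A'. I ** A' = mat 1 \<and> A' ** I = mat 1", THEN conjunct1])
  then show "I *v (matrix_inv I *v z) = z" for z by (simp add: matrix_vector_mul_assoc)
qed

lemma bound_on_closure:
  fixes \<Omega> :: "(real^'n) set"
  assumes "bounded \<Omega>"
  obtains R where "R \<ge> 0" "\<forall>x\<in>closure \<Omega>. norm x \<le> R"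
  using assms bounded_closure bounded_pos by (metis less_imp_le)

lemma cross3_bound: "norm (cross3 a b) \<le> norm a * norm b"
proof -
  have "(norm (cross3 a b))\<^sup>2 \<le> (norm a * norm b)\<^sup>2" using norm_cross_dot[of a b] zero_le_power2[of "a \<bullet> b"] by linarith
  then show ?thesis by (rule power2_le_imp_le) simp
qed

lemma cross2_bound: "\<bar>cross2 a b\<bar> \<le> 2 * (norm a * norm b)"
proof -
  have "\<bar>a$1\<bar> \<le> norm a" "\<bar>a$2\<bar> \<le> norm a" "\<bar>b$1\<bar> \<le> norm b" "\<bar>b$2\<bar> \<le> norm b"
    by (simp_all add: component_le_norm_cart)
  then have "\<bar>a$1\<bar> * \<bar>b$2\<bar> \<le> norm a * norm b" "\<bar>a$2\<bar> * \<bar>b$1\<bar> \<le> norm a * norm b"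
    by (simp_all add: mult_mono')
  moreover have "\<bar>a$1 * b$2 - a$2 * b$1\<bar> \<le> \<bar>a$1\<bar> * \<bar>b$2\<bar> + \<bar>a$2\<bar> * \<bar>b$1\<bar>"
    using abs_triangle_ineq4[of "a$1 * b$2" "a$2 * b$1"] by (simp add: abs_mult)
  ultimately show ?thesis unfolding cross2_def by linarith
qed

theorem theorem2p2:
  shows
  "(\<forall>(\<Omega>::(real^3) set) \<Gamma> \<Gamma>' \<sigma> n \<rho> m (c::real^3) (I::real^3^3)
       (Ustar::real^3 \<Rightarrow> real^3) vstar wstar U v w p.
     bounded_domain \<Omega> \<and> frontier \<Omega> = \<Gamma> \<union> \<Gamma>' \<and> \<Gamma> \<inter> \<Gamma>' = {} \<and>
     (\<exists>S. bounded_domain S \<and> frontier S = \<Gamma>) \<and>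
     outward_normal \<Omega> \<sigma> n \<and> \<rho> > 0 \<and> m > 0 \<and>
     transpose I = I \<and> (\<forall>x. x \<noteq> 0 \<longrightarrow> x \<bullet> (I *v x) > 0) \<and>
     C1_near (closure \<Omega>) p \<and> C1_near (closure \<Omega>) U \<and>
     (\<forall>x\<in>\<Omega>. Ustar x = U x + (1/\<rho>) *\<^sub>R grad p x) \<and>
     vstar = v + (- (1/m) *\<^sub>R (LINT x:\<Gamma>|\<sigma>. p x *\<^sub>R n x)) \<and>
     wstar = w + (- (matrix_inv I *v (LINT x:\<Gamma>|\<sigma>. p x *\<^sub>R cross3 (x - c) (n x)))) \<and>
     (\<forall>x\<in>\<Omega>. divergence U x = 0) \<and>
     (AE x in \<sigma>. x \<in> \<Gamma> \<longrightarrow> U x \<bullet> n x = v \<bullet> n x + w \<bullet> cross3 (x - c) (n x)) \<and>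
     (AE x in \<sigma>. x \<in> \<Gamma>' \<longrightarrow> U x \<bullet> n x = 0)
   \<longrightarrow>
     ipE \<Omega> \<rho> m ((*v) I) (U, v, w)
        (\<lambda>x. (1/\<rho>) *\<^sub>R grad p x,
         - (1/m) *\<^sub>R (LINT x:\<Gamma>|\<sigma>. p x *\<^sub>R n x),
         - (matrix_inv I *v (LINT x:\<Gamma>|\<sigma>. p x *\<^sub>R cross3 (x - c) (n x)))) = 0 \<and>
     ipE \<Omega> \<rho> m ((*v) I) (Ustar, vstar, wstar) (Ustar, vstar, wstar)
       \<ge> ipE \<Omega> \<rho> m ((*v) I) (U, v, w) (U, v, w))
 \<and>
  (\<forall>(\<Omega>::(real^2) set) \<Gamma> \<Gamma>' \<sigma> n \<rho> m (c::real^2) (I::real)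
       (Ustar::real^2 \<Rightarrow> real^2) vstar (wstar::real) U v w p.
     bounded_domain \<Omega> \<and> frontier \<Omega> = \<Gamma> \<union> \<Gamma>' \<and> \<Gamma> \<inter> \<Gamma>' = {} \<and>
     (\<exists>S. bounded_domain S \<and> frontier S = \<Gamma>) \<and>
     outward_normal \<Omega> \<sigma> n \<and> \<rho> > 0 \<and> m > 0 \<and> I > 0 \<and>
     C1_near (closure \<Omega>) p \<and> C1_near (closure \<Omega>) U \<and>
     (\<forall>x\<in>\<Omega>. Ustar x = U x + (1/\<rho>) *\<^sub>R grad p x) \<and>
     vstar = v + (- (1/m) *\<^sub>R (LINT x:\<Gamma>|\<sigma>. p x *\<^sub>R n x)) \<and>
     wstar = w + (- ((1/I) * (LINT x:\<Gamma>|\<sigma>. p x * cross2 (x - c) (n x)))) \<and>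
     (\<forall>x\<in>\<Omega>. divergence U x = 0) \<and>
     (AE x in \<sigma>. x \<in> \<Gamma> \<longrightarrow> U x \<bullet> n x = v \<bullet> n x + w * cross2 (x - c) (n x)) \<and>
     (AE x in \<sigma>. x \<in> \<Gamma>' \<longrightarrow> U x \<bullet> n x = 0)
   \<longrightarrow>
     ipE \<Omega> \<rho> m ((*) I) (U, v, w)
        (\<lambda>x. (1/\<rho>) *\<^sub>R grad p x,
         - (1/m) *\<^sub>R (LINT x:\<Gamma>|\<sigma>. p x *\<^sub>R n x),
         - ((1/I) * (LINT x:\<Gamma>|\<sigma>. p x * cross2 (x - c) (n x)))) = 0 \<and>
     ipE \<Omega> \<rho> m ((*) I) (Ustar, vstar, wstar) (Ustar, vstar, wstar)
       \<ge> ipE \<Omega> \<rho> m ((*) I) (U, v, w) (U, v, w))"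
proof (intro conjI allI impI)
  fix \<Omega> :: "(real^3) set" and \<Gamma> \<Gamma>' \<sigma> n \<rho> m and c :: "real^3" and I :: "real^3^3"
    and Ustar :: "real^3 \<Rightarrow> real^3" and vstar wstar U v w p
  assume H: "bounded_domain \<Omega> \<and> frontier \<Omega> = \<Gamma> \<union> \<Gamma>' \<and> \<Gamma> \<inter> \<Gamma>' = {} \<and>
     (\<exists>S. bounded_domain S \<and> frontier S = \<Gamma>) \<and>
     outward_normal \<Omega> \<sigma> n \<and> \<rho> > 0 \<and> m > 0 \<and>
     transpose I = I \<and> (\<forall>x. x \<noteq> 0 \<longrightarrow> x \<bullet> (I *v x) > 0) \<and>
     C1_near (closure \<Omega>) p \<and> C1_near (closure \<Omega>) U \<and>
     (\<forall>x\<in>\<Omega>. Ustar x = U x + (1/\<rho>) *\<^sub>R grad p x) \<and>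
     vstar = v + (- (1/m) *\<^sub>R (LINT x:\<Gamma>|\<sigma>. p x *\<^sub>R n x)) \<and>
     wstar = w + (- (matrix_inv I *v (LINT x:\<Gamma>|\<sigma>. p x *\<^sub>R cross3 (x - c) (n x)))) \<and>
     (\<forall>x\<in>\<Omega>. divergence U x = 0) \<and>
     (AE x in \<sigma>. x \<in> \<Gamma> \<longrightarrow> U x \<bullet> n x = v \<bullet> n x + w \<bullet> cross3 (x - c) (n x)) \<and>
     (AE x in \<sigma>. x \<in> \<Gamma>' \<longrightarrow> U x \<bullet> n x = 0)"
  have Oo: "open \<Omega>" and Ob: "bounded \<Omega>" using H by (auto simp: bounded_domain_def)
  have Gc: "closed \<Gamma>" using H frontier_closed by blast
  have on: "outward_normal \<Omega> \<sigma> n" using H by blast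
  have nm: "n \<in> borel_measurable borel" and n1: "\<forall>x\<in>frontier \<Omega>. norm (n x) = 1"
    using on unfolding outward_normal_def by auto
  obtain R where R: "R \<ge> 0" "\<forall>x\<in>closure \<Omega>. norm x \<le> R" using bound_on_closure[OF Ob] by blast
  have Jm: "(\<lambda>x. cross3 (x - c) (n x)) \<in> borel_measurable borel"
  proof -
    have "continuous_on UNIV (\<lambda>z::(real^3)\<times>(real^3). cross3 (fst z) (snd z))"
      by (intro continuous_on_cross continuous_intros)
    then have "(\<lambda>x. (\<lambda>z::(real^3)\<times>(real^3). cross3 (fst z) (snd z)) (x - c, n x)) \<in> borel_measurable borel"
      by (rule borel_measurable_continuous_on) (use nm in measurable)
    then show ?thesis by simp
  qed
  have Jb: "\<forall>x\<in>\<Gamma>. norm (cross3 (x - c) (n x)) \<le> R + norm c"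
  proof
    fix x assume x: "x \<in> \<Gamma>"
    then have xf: "x \<in> frontier \<Omega>" using H by auto
    then have "norm x \<le> R" using R frontier_def by auto
    then have "norm (x - c) \<le> R + norm c" using norm_triangle_ineq4[of x c] by linarith
    then show "norm (cross3 (x - c) (n x)) \<le> R + norm c"
      using cross3_bound[of "x - c" "n x"] n1 xf by simp
  qed
  have tr: "transpose I = I" and pd: "\<forall>x. x \<noteq> 0 \<longrightarrow> x \<bullet> (I *v x) > 0" using H by auto
  note mf = matrix_facts[OF tr pd]
  have M: "ipE \<Omega> \<rho> m ((*v) I) (U, v, w)
        (\<lambda>x. (1/\<rho>) *\<^sub>R grad p x, - (1/m) *\<^sub>R (LINT x:\<Gamma>|\<sigma>. p x *\<^sub>R n x),
         - ((*v) (matrix_inv I)) (LINT x:\<Gamma>|\<sigma>. p x *\<^sub>R cross3 (x - c) (n x))) = 0 \<and>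
     ipE \<Omega> \<rho> m ((*v) I) (Ustar, vstar, wstar) (Ustar, vstar, wstar) \<ge> ipE \<Omega> \<rho> m ((*v) I) (U, v, w) (U, v, w)"
    by (rule main[OF Oo Ob _ _ Gc on _ _ matrix_vector_mul_linear _ _ _ _ _ _ _ _ _ _ _ Jm _ Jb])
      (use H R mf in \<open>auto\<close>)
  show "ipE \<Omega> \<rho> m ((*v) I) (U, v, w)
        (\<lambda>x. (1/\<rho>) *\<^sub>R grad p x,
         - (1/m) *\<^sub>R (LINT x:\<Gamma>|\<sigma>. p x *\<^sub>R n x),
         - (matrix_inv I *v (LINT x:\<Gamma>|\<sigma>. p x *\<^sub>R cross3 (x - c) (n x)))) = 0"
   and "ipE \<Omega> \<rho> m ((*v) I) (Ustar, vstar, wstar) (Ustar, vstar, wstar)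
       \<ge> ipE \<Omega> \<rho> m ((*v) I) (U, v, w) (U, v, w)"
    using M by auto
next
  fix \<Omega> :: "(real^2) set" and \<Gamma> \<Gamma>' \<sigma> n \<rho> m and c :: "real^2" and I :: real
    and Ustar :: "real^2 \<Rightarrow> real^2" and vstar and wstar :: real and U v w p
  assume H: "bounded_domain \<Omega> \<and> frontier \<Omega> = \<Gamma> \<union> \<Gamma>' \<and> \<Gamma> \<inter> \<Gamma>' = {} \<and>
     (\<exists>S. bounded_domain S \<and> frontier S = \<Gamma>) \<and>
     outward_normal \<Omega> \<sigma> n \<and> \<rho> > 0 \<and> m > 0 \<and> I > 0 \<and>
     C1_near (closure \<Omega>) p \<and> C1_near (closure \<Omega>) U \<and>
     (\<forall>x\<in>\<Omega>. Ustar x = U x + (1/\<rho>) *\<^sub>R grad p x) \<and>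
     vstar = v + (- (1/m) *\<^sub>R (LINT x:\<Gamma>|\<sigma>. p x *\<^sub>R n x)) \<and>
     wstar = w + (- ((1/I) * (LINT x:\<Gamma>|\<sigma>. p x * cross2 (x - c) (n x)))) \<and>
     (\<forall>x\<in>\<Omega>. divergence U x = 0) \<and>
     (AE x in \<sigma>. x \<in> \<Gamma> \<longrightarrow> U x \<bullet> n x = v \<bullet> n x + w * cross2 (x - c) (n x)) \<and>
     (AE x in \<sigma>. x \<in> \<Gamma>' \<longrightarrow> U x \<bullet> n x = 0)"
  have Oo: "open \<Omega>" and Ob: "bounded \<Omega>" using H by (auto simp: bounded_domain_def)
  have Gc: "closed \<Gamma>" using H frontier_closed by blast
  have on: "outward_normal \<Omega> \<sigma> n" using H by blast
  have nm: "n \<in> borel_measurable borel" and n1: "\<forall>x\<in>frontier \<Omega>. norm (n x) = 1"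
    using on unfolding outward_normal_def by auto
  obtain R where R: "R \<ge> 0" "\<forall>x\<in>closure \<Omega>. norm x \<le> R" using bound_on_closure[OF Ob] by blast
  have Jm: "(\<lambda>x. cross2 (x - c) (n x)) \<in> borel_measurable borel"
  proof -
    have "continuous_on UNIV (\<lambda>z::(real^2)\<times>(real^2). cross2 (fst z) (snd z))"
      unfolding cross2_def by (intro continuous_intros)
    then have "(\<lambda>x. (\<lambda>z::(real^2)\<times>(real^2). cross2 (fst z) (snd z)) (x - c, n x)) \<in> borel_measurable borel"
      by (rule borel_measurable_continuous_on) (use nm in measurable)
    then show ?thesis by simp
  qed
  have Jb: "\<forall>x\<in>\<Gamma>. norm (cross2 (x - c) (n x)) \<le> 2 * (R + norm c)"
  proof
    fix x assume x: "x \<in> \<Gamma>"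
    then have xf: "x \<in> frontier \<Omega>" using H by auto
    then have "norm x \<le> R" using R frontier_def by auto
    then have "norm (x - c) \<le> R + norm c" using norm_triangle_ineq4[of x c] by linarith
    then show "norm (cross2 (x - c) (n x)) \<le> 2 * (R + norm c)"
      using cross2_bound[of "x - c" "n x"] n1 xf by simp
  qed
  have lin: "linear ((*) I)" by (rule linear_times)
  have I0: "I \<noteq> 0" using H by simp
  have posI: "0 \<le> a * (I * a)" for a :: real
  proof -
    have "0 \<le> I * (a * a)" using H by (intro mult_nonneg_nonneg[OF _ zero_le_square]) auto
    then show ?thesis by (simp add: algebra_simps)
  qed
  have M: "ipE \<Omega> \<rho> m ((*) I) (U, v, w)
        (\<lambda>x. (1/\<rho>) *\<^sub>R grad p x, - (1/m) *\<^sub>R (LINT x:\<Gamma>|\<sigma>. p x *\<^sub>R n x),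
         - ((*) (1/I)) (LINT x:\<Gamma>|\<sigma>. p x *\<^sub>R cross2 (x - c) (n x))) = 0 \<and>
     ipE \<Omega> \<rho> m ((*) I) (Ustar, vstar, wstar) (Ustar, vstar, wstar) \<ge> ipE \<Omega> \<rho> m ((*) I) (U, v, w) (U, v, w)"
    by (rule main[OF Oo Ob _ _ Gc on _ _ lin _ _ _ _ _ _ _ _ _ _ _ Jm _ Jb])
      (use H I0 R posI in \<open>auto simp: inner_real_def\<close>)
  then show "ipE \<Omega> \<rho> m ((*) I) (U, v, w)
        (\<lambda>x. (1/\<rho>) *\<^sub>R grad p x,
         - (1/m) *\<^sub>R (LINT x:\<Gamma>|\<sigma>. p x *\<^sub>R n x),
         - ((1/I) * (LINT x:\<Gamma>|\<sigma>. p x * cross2 (x - c) (n x)))) = 0"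
   and "ipE \<Omega> \<rho> m ((*) I) (Ustar, vstar, wstar) (Ustar, vstar, wstar)
       \<ge> ipE \<Omega> \<rho> m ((*) I) (U, v, w) (U, v, w)"
    by auto
qed

end
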